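(* Let $n\in\{2,3\}$, $0<2\alpha_m<2\alpha_M<2\alpha'<\pi$ and $k>0$. Write $(\mathcal Q,\mathfrak P)\in\mathscr G(\alpha_m,\alpha_M,\alpha',n)$ if: $\mathcal Q\subset\mathbb R^n$ is an open spherical cone and $\mathfrak P\subset\mathbb R^n$ an open convex polyhedral cone with a common vertex $x_c$; $\mathfrak P\subset\mathcal Q$; $\mathcal Q$ has opening angle at most $2\alpha'$; in 2D, $\mathfrak P$ has opening angle in $]2\alpha_m,2\alpha_M[$; in 3D, $\mathfrak P$ is mapped to $]0,\infty[^3$ by a rigid motion. Then there exist $\tau_0=k\,C(\alpha_m,\alpha_M,\alpha',n)>0$ and $c=c(\alpha_m,\alpha_M,n)>0$ such that for every $(\mathcal Q,\mathfrak P)\in\mathscr G(\alpha_m,\alpha_M,\alpha',n)$ there is a curve $\tau\mapsto\rho(\tau)\in\mathbb C^n$, $\tau>0$ (depending on $\mathcal Q$), satisfying $\rho(\tau)\cdot\rho(\tau)+k^2=0$, $\tau=|\Re\rho(\tau)|$, $\Re\rho(\tau)\cdot(x-x_c)\le-\cos\alpha'\,|\Re\rho(\tau)|\,|x-x_c|$ for all $x\in\mathcal Q$, and such that for all $\tau\ge\tau_0$, \[ \Big|\int_{\mathfrak P}e^{\rho(\tau)\cdot(x-x_c)}dx\Big|\ge c\,\tau^{-n}. \]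
   Context: Here $a\cdot b=\sum_ja_jb_j$ (bilinear, no conjugation) for $a,b\in\mathbb C^n$. An open spherical cone with vertex $x_c$, axis unit vector $v$ and opening angle $2\theta$ ($0<\theta<\pi/2$) is $\{x\neq x_c: (x-x_c)\cdot v>|x-x_c|\cos\theta\}$. In 2D the opening angle of a convex cone is the angle between its two boundary rays. *)

theory Defs
  imports "HOL-Analysis.Analysis"
begin

definition cdot :: "complex^'n \<Rightarrow> complex^'n \<Rightarrow> complex" where
  "cdot a b = (\<Sum>j\<in>UNIV. a $ j * b $ j)"

definition cvec :: "real^'n \<Rightarrow> complex^'n" where
  "cvec x = (\<chi> j. complex_of_real (x $ j))"

definition Re_vec :: "complex^'n \<Rightarrow> real^'n" where
  "Re_vec z = (\<chi> j. Re (z $ j))"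

definition spherical_cone :: "real^'n \<Rightarrow> real^'n \<Rightarrow> real \<Rightarrow> (real^'n) set" where
  "spherical_cone xc v \<theta> = {x. x \<noteq> xc \<and> (x - xc) \<bullet> v > norm (x - xc) * cos \<theta>}"

definition open_polyhedral_cone :: "(real^'n) set \<Rightarrow> real^'n \<Rightarrow> bool" where
  "open_polyhedral_cone P xc \<longleftrightarrow>
     (\<exists>A. finite A \<and> P = {x. \<forall>a\<in>A. a \<bullet> (x - xc) > 0}) \<and> P \<noteq> {}"

definition rigid_motion :: "(real^'n \<Rightarrow> real^'n) \<Rightarrow> bool" where
  "rigid_motion f \<longleftrightarrow> (\<exists>A b. orthogonal_matrix A \<and> det A = 1 \<and> f = (\<lambda>x. A *v x + b))"

definition in_G :: "real \<Rightarrow> real \<Rightarrow> real \<Rightarrow> (real^'n) set \<Rightarrow> (real^'n) set \<Rightarrow> real^'n \<Rightarrow> bool" where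
  "in_G \<alpha>m \<alpha>M \<alpha>' Q P xc \<longleftrightarrow>
     (\<exists>v \<theta>. norm v = 1 \<and> 0 < \<theta> \<and> \<theta> < pi / 2 \<and> Q = spherical_cone xc v \<theta>
            \<and> 2 * \<theta> \<le> 2 * \<alpha>') \<and>
     open_polyhedral_cone P xc \<and> P \<subseteq> Q \<and>
     (CARD('n) = 2 \<longrightarrow>
        (\<exists>u w. u \<noteq> 0 \<and> w \<noteq> 0 \<and> P = {xc + s *\<^sub>R u + t *\<^sub>R w | s t. 0 < s \<and> 0 < t} \<and>
               2 * \<alpha>m < arccos ((u \<bullet> w) / (norm u * norm w)) \<and>
               arccos ((u \<bullet> w) / (norm u * norm w)) < 2 * \<alpha>M)) \<and>
     (CARD('n) = 3 \<longrightarrow>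
        (\<exists>f. rigid_motion f \<and> f xc = 0 \<and> f ` P = {y. \<forall>i. 0 < y $ i}))"

end

theory Submission
  imports Defs
begin


definition perm_vec :: "('b \<Rightarrow> 'a) \<Rightarrow> real^'a \<Rightarrow> real^'b" where
  "perm_vec e y = (\<chi> j. y $ e j)"

lemma perm_vec_nth[simp]: "perm_vec e y $ j = y $ e j"
  by (simp add: perm_vec_def)

lemma linear_perm_vec: "linear (perm_vec e)"
  by (auto simp: linear_iff vec_eq_iff)

lemma perm_vec_inv: "bij e \<Longrightarrow> perm_vec (inv e) (perm_vec e y) = y"
  by (simp add: vec_eq_iff bij_inv_eq_iff bij_is_surj surj_f_inv_f)

lemma perm_vec_inv2: "bij e \<Longrightarrow> perm_vec e (perm_vec (inv e) y) = y"
  by (simp add: vec_eq_iff bij_is_inj)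

lemma perm_vec_preimage_box:
  assumes "bij e"
  shows "perm_vec e -` box l u = box (perm_vec (inv e) l) (perm_vec (inv e) u)"
proof -
  have "(\<forall>j. l $ j < y $ e j \<and> y $ e j < u $ j) \<longleftrightarrow> (\<forall>i. l $ inv e i < y $ i \<and> y $ i < u $ inv e i)" for y
  proof
    assume H: "\<forall>j. l $ j < y $ e j \<and> y $ e j < u $ j"
    show "\<forall>i. l $ inv e i < y $ i \<and> y $ i < u $ inv e i"
    proof
      fix i have "e (inv e i) = i" using assms by (simp add: bij_is_surj surj_f_inv_f)
      then show "l $ inv e i < y $ i \<and> y $ i < u $ inv e i" using H[rule_format, of "inv e i"] by simp
    qed
  next
    assume H: "\<forall>i. l $ inv e i < y $ i \<and> y $ i < u $ inv e i"
    show "\<forall>j. l $ j < y $ e j \<and> y $ e j < u $ j"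
    proof
      fix j have "inv e (e j) = j" using assms by (simp add: bij_is_inj)
      then show "l $ j < y $ e j \<and> y $ e j < u $ j" using H[rule_format, of "e j"] by simp
    qed
  qed
  then show ?thesis by (auto simp: mem_box_cart)
qed

lemma prod_Basis_cart: "(\<Prod>b\<in>Basis. (x::real^'n) \<bullet> b) = (\<Prod>i\<in>UNIV. x $ i)"
proof -
  have B: "(Basis::(real^'n) set) = (\<lambda>i. axis i 1) ` UNIV" by (auto simp: Basis_vec_def)
  have "(\<Prod>b\<in>Basis. x \<bullet> b) = (\<Prod>i\<in>UNIV. x \<bullet> axis i 1)"
    unfolding B by (subst prod.reindex) (auto simp: inj_on_def axis_eq_axis)
  then show ?thesis by (simp add: inner_axis)
qed

lemma CV:
  fixes e :: "'k::finite \<Rightarrow> 'm::{finite,wellorder}" and L :: "real^'m::_ \<Rightarrow> real^'m::_"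
  assumes e: "bij e" and L: "linear L" and d: "det (matrix L) \<noteq> 0"
  shows "lborel = density (distr lborel borel (perm_vec e \<circ> L)) (\<lambda>_. ennreal \<bar>det (matrix L)\<bar>)"
proof (rule lborel_eqI)
  obtain Li where Li: "linear Li" "\<And>x. Li (L x) = x" "\<And>x. L (Li x) = x"
    using linear_injective_isomorphism[OF L] det_nz_iff_inj[OF L] d by metis
  have dLi: "det (matrix Li) * det (matrix L) = 1"
  proof -
    have "Li \<circ> L = id" using Li by auto
    then have "matrix Li ** matrix L = mat 1"
      using matrix_compose[OF L Li(1)] by (simp add: matrix_id_mat_1)
    then show ?thesis by (metis det_I det_mul)
  qed
  have meas[measurable]: "perm_vec e \<circ> L \<in> borel_measurable borel"
    using linear_compose[OF L linear_perm_vec[of e]]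
    by (intro borel_measurable_continuous_onI linear_continuous_on) (simp add: linear_conv_bounded_linear)
  fix l u :: "real^'k" assume le: "\<And>b. b \<in> Basis \<Longrightarrow> l \<bullet> b \<le> u \<bullet> b"
  define l' where "l' = perm_vec (inv e) l"
  define u' where "u' = perm_vec (inv e) u"
  have pre: "(perm_vec e \<circ> L) -` box l u = Li ` box l' u'"
  proof -
    have "(perm_vec e \<circ> L) -` box l u = L -` (perm_vec e -` box l u)"
      by auto
    also have "\<dots> = L -` box l' u'"
      using perm_vec_preimage_box[OF e] by (simp add: l'_def u'_def)
    also have "\<dots> = Li ` box l' u'"
      using Li by (auto simp: image_iff) (metis)
    finally show ?thesis .
  qed
  have bor: "Li ` box l' u' \<in> sets borel"
    by (metis pre meas measurable_sets_borel open_box borel_open)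
  have lm: "Li ` box l' u' \<in> lmeasurable"
    by (rule measurable_linear_image[OF Li(1) lmeasurable_box])
  have "emeasure lborel (Li ` box l' u') = emeasure lebesgue (Li ` box l' u')"
    using bor by simp
  also have "\<dots> = ennreal (measure lebesgue (Li ` box l' u'))"
    using lm by (simp add: emeasure_eq_measure2)
  also have "\<dots> = ennreal (\<bar>det (matrix Li)\<bar> * measure lebesgue (box l' u'))"
    by (simp add: measure_linear_image[OF Li(1) lmeasurable_box])
  finally have eq1: "emeasure lborel (Li ` box l' u') = ennreal (\<bar>det (matrix Li)\<bar> * measure lebesgue (box l' u'))" .
  have le': "\<And>i. l' $ i \<le> u' $ i"
    using le[of "axis (inv e _) 1"] by (auto simp: l'_def u'_def inner_axis Basis_vec_def)
  have "measure lebesgue (box l' u') = measure lborel (box l' u')" by simp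
  also have "\<dots> = (\<Prod>i\<in>UNIV. u' $ i - l' $ i)"
  proof -
    have "\<And>b. b \<in> Basis \<Longrightarrow> l' \<bullet> b \<le> u' \<bullet> b"
      using le' by (auto simp: Basis_vec_def inner_axis)
    then have "emeasure lborel (box l' u') = ennreal (\<Prod>b\<in>Basis. (u' - l') \<bullet> b)"
      by (rule emeasure_lborel_box)
    moreover have "(\<Prod>b\<in>Basis. (u' - l') \<bullet> b) = (\<Prod>i\<in>UNIV. u' $ i - l' $ i)"
      by (simp add: prod_Basis_cart)
    moreover have "(\<Prod>i\<in>UNIV. u' $ i - l' $ i) \<ge> 0" using le' by (simp add: prod_nonneg)
    ultimately show ?thesis by (simp add: measure_def)
  qed
  also have "\<dots> = (\<Prod>j\<in>UNIV. u $ j - l $ j)"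
    unfolding l'_def u'_def perm_vec_nth
    by (rule prod.reindex_bij_betw) (use bij_imp_bij_inv[OF e] in \<open>simp add: bij_betw_def\<close>)
  also have "\<dots> = (\<Prod>b\<in>Basis. (u - l) \<bullet> b)"
    by (simp add: prod_Basis_cart)
  finally have eq2: "measure lebesgue (box l' u') = (\<Prod>b\<in>Basis. (u - l) \<bullet> b)" .
  have "emeasure (density (distr lborel borel (perm_vec e \<circ> L)) (\<lambda>_. ennreal \<bar>det (matrix L)\<bar>)) (box l u)
      = ennreal \<bar>det (matrix L)\<bar> * emeasure (distr lborel borel (perm_vec e \<circ> L)) (box l u)"
    by (simp add: emeasure_density nn_integral_cmult_indicator)
  also have "\<dots> = ennreal \<bar>det (matrix L)\<bar> * emeasure lborel (Li ` box l' u')"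
    by (simp add: emeasure_distr pre)
  also have "\<dots> = ennreal (\<Prod>b\<in>Basis. (u - l) \<bullet> b)"
    unfolding eq1 eq2
    by (subst ennreal_mult'[symmetric]) (auto simp: abs_mult[symmetric] dLi mult.commute[of "det (matrix L)"] mult.assoc[symmetric])
  finally show "emeasure (density (distr lborel borel (perm_vec e \<circ> L)) (\<lambda>_. ennreal \<bar>det (matrix L)\<bar>)) (box l u)
      = (\<Prod>b\<in>Basis. (u - l) \<bullet> b)" .
qed simp



lemma exp_int_1d:
  fixes a :: complex assumes a: "Re a < 0"
  shows "integrable lborel (\<lambda>t. indicator {0<..} t *\<^sub>R exp (complex_of_real t * a))"
    and "integral\<^sup>L lborel (\<lambda>t. indicator {0<..} t *\<^sub>R exp (complex_of_real t * a)) = - 1 / a"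
proof -
  have a0: "a \<noteq> 0" using a by auto
  have ra0: "Re a \<noteq> 0" using a by auto
  have ri: "set_integrable lborel {0<..} (\<lambda>t. exp (-(t * (- Re a))))"
  proof -
    have "set_integrable lborel (einterval 0 \<infinity>) (\<lambda>t. exp (-(t * (- Re a))))"
    proof (rule interval_integral_FTC_nonneg)
      show "((\<lambda>t. exp (t * Re a) / Re a) has_real_derivative exp (-(x * (- Re a)))) (at x)" for x
        using ra0 by (auto intro!: derivative_eq_intros)
      show "((((\<lambda>t. exp (t * Re a) / Re a)) \<circ> real_of_ereal) \<longlongrightarrow> 1 / Re a) (at_right 0)"
        using ra0 by (auto simp: zero_ereal_def ereal_tendsto_simps intro!: tendsto_eq_intros)
      have *: "((\<lambda>t. exp (t * Re a)) \<longlongrightarrow> 0) at_top"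
      proof -
        have "filterlim (\<lambda>t. Re a * t) at_bot at_top"
          by (rule filterlim_tendsto_neg_mult_at_bot[OF tendsto_const a filterlim_ident])
        then show ?thesis
          by (auto intro!: exp_at_bot[THEN filterlim_compose] simp: mult.commute)
      qed
      show "((((\<lambda>t. exp (t * Re a) / Re a)) \<circ> real_of_ereal) \<longlongrightarrow> 0 / Re a) (at_left \<infinity>)"
        unfolding ereal_tendsto_simps
        by (intro tendsto_intros * ra0)
    qed auto
    then show ?thesis by (simp add: zero_ereal_def)
  qed
  have si: "set_integrable lborel {0<..} (\<lambda>t. exp (complex_of_real t * a))"
    unfolding set_integrable_def
  proof (rule Bochner_Integration.integrable_bound)
    show "integrable lborel (\<lambda>t. indicator {0<..} t *\<^sub>R exp (-(t * (- Re a))))"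
      using ri by (simp add: set_integrable_def)
    show "(\<lambda>t. indicator {0<..} t *\<^sub>R exp (complex_of_real t * a)) \<in> borel_measurable lborel"
      by measurable
    show "AE x in lborel. norm (indicator {0<..} x *\<^sub>R exp (complex_of_real x * a))
        \<le> norm (indicator {0<..} x *\<^sub>R exp (-(x * (- Re a))))"
      by (auto simp: indicator_def norm_exp_eq_Re)
  qed
  then show "integrable lborel (\<lambda>t. indicator {0<..} t *\<^sub>R exp (complex_of_real t * a))"
    by (simp add: set_integrable_def)
  have "(LBINT t=0..\<infinity>. exp (complex_of_real t * a)) = 0 - 1 / a"
  proof (rule interval_integral_FTC_integrable)
    show "((\<lambda>t. exp (complex_of_real t * a) / a) has_vector_derivative exp (complex_of_real x * a)) (at x)" for x
    proof -
      have "((\<lambda>z. exp (z * a) / a) has_field_derivative exp (complex_of_real x * a)) (at (complex_of_real x))"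
        using a0 by (auto intro!: derivative_eq_intros)
      from has_vector_derivative_real_field[OF this] show ?thesis by simp
    qed
  next
    show "set_integrable lborel (einterval 0 \<infinity>) (\<lambda>t. exp (complex_of_real t * a))"
      using si by (simp add: zero_ereal_def)
  next
    show "(((\<lambda>t. exp (complex_of_real t * a) / a) \<circ> real_of_ereal) \<longlongrightarrow> 1 / a) (at_right 0)"
      using a0 by (auto simp: zero_ereal_def ereal_tendsto_simps intro!: tendsto_eq_intros)
  next
    have *: "((\<lambda>t. exp (t * Re a)) \<longlongrightarrow> 0) at_top"
    proof -
      have "filterlim (\<lambda>t. Re a * t) at_bot at_top"
        by (rule filterlim_tendsto_neg_mult_at_bot[OF tendsto_const a filterlim_ident])
      then show ?thesis
        by (auto intro!: exp_at_bot[THEN filterlim_compose] simp: mult.commute)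
    qed
    have "((\<lambda>t. exp (complex_of_real t * a) / a) \<longlongrightarrow> 0) at_top"
    proof (rule tendsto_norm_zero_cancel)
      have "((\<lambda>t. exp (t * Re a) / norm a) \<longlongrightarrow> 0 / norm a) at_top"
        using a0 by (intro tendsto_intros *) simp
      then show "((\<lambda>t. norm (exp (complex_of_real t * a) / a)) \<longlongrightarrow> 0) at_top"
        by (simp add: norm_divide norm_exp_eq_Re)
    qed
    then show "(((\<lambda>t. exp (complex_of_real t * a) / a) \<circ> real_of_ereal) \<longlongrightarrow> 0) (at_left \<infinity>)"
      unfolding ereal_tendsto_simps .
  qed (auto intro!: continuous_intros)
  then show "integral\<^sup>L lborel (\<lambda>t. indicator {0<..} t *\<^sub>R exp (complex_of_real t * a)) = - 1 / a"
    by (simp add: interval_lebesgue_integral_0_infty set_lebesgue_integral_def)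
qed


lemma lborel_prod_euclid:
  fixes f :: "'a::euclidean_space \<Rightarrow> real \<Rightarrow> complex"
  assumes int: "\<And>b. b \<in> Basis \<Longrightarrow> integrable lborel (f b)"
  shows "integrable lborel (\<lambda>x::'a. \<Prod>b\<in>Basis. f b (x \<bullet> b))"
    and "integral\<^sup>L lborel (\<lambda>x::'a. \<Prod>b\<in>Basis. f b (x \<bullet> b)) = (\<Prod>b\<in>Basis. integral\<^sup>L lborel (f b))"
proof -
  interpret product_sigma_finite "\<lambda>_::'a. lborel :: real measure" by standard
  define T where "T = (\<lambda>g. \<Sum>b\<in>(Basis::'a set). g b *\<^sub>R b)"
  have Tm[measurable]: "T \<in> borel_measurable (\<Pi>\<^sub>M b\<in>Basis. lborel)"
    unfolding T_def by measurable
  have fm[measurable]: "\<And>b. b \<in> Basis \<Longrightarrow> f b \<in> borel_measurable lborel"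
    using int by auto
  have Tb: "T g \<bullet> b = g b" if "b \<in> Basis" for g b
    using that by (simp add: T_def inner_sum_left inner_Basis if_distrib cong: if_cong)
  have meas: "(\<lambda>x::'a. \<Prod>b\<in>Basis. f b (x \<bullet> b)) \<in> borel_measurable borel"
    by measurable
  have eq: "(\<lambda>g. \<Prod>b\<in>Basis. f b (T g \<bullet> b)) = (\<lambda>g. \<Prod>b\<in>Basis. f b (g b))"
    by (auto simp: Tb intro!: prod.cong)
  have pi: "integrable (\<Pi>\<^sub>M b\<in>Basis. lborel) (\<lambda>g. \<Prod>b\<in>Basis. f b (g b))"
    by (rule product_integrable_prod) (auto intro: int)
  show "integrable lborel (\<lambda>x::'a. \<Prod>b\<in>Basis. f b (x \<bullet> b))"
    apply (subst lborel_eq)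
    apply (subst integrable_distr_eq)
    using Tm pi eq by (auto simp: T_def[symmetric] intro!: meas)
  show "integral\<^sup>L lborel (\<lambda>x::'a. \<Prod>b\<in>Basis. f b (x \<bullet> b)) = (\<Prod>b\<in>Basis. integral\<^sup>L lborel (f b))"
    apply (subst lborel_eq)
    apply (subst integral_distr)
    using Tm eq by (auto simp: T_def[symmetric] intro!: meas product_integral_prod int)
qed


lemma Basis_cart_range: "(Basis::(real^'n) set) = range (\<lambda>i. axis i 1)"
  by (auto simp: Basis_vec_def)

lemma prod_Basis_cart_gen:
  "(\<Prod>b\<in>(Basis::(real^'n) set). F b) = (\<Prod>i\<in>UNIV. F (axis i 1))"
  unfolding Basis_cart_range by (subst prod.reindex) (auto simp: inj_on_def axis_eq_axis)

lemma orthant_exp: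
  fixes a :: "'m::finite \<Rightarrow> complex"
  assumes a: "\<And>j. Re (a j) < 0"
  shows "integrable lborel (\<lambda>s::real^'m. indicator {s. \<forall>j. 0 < s$j} s *\<^sub>R exp (\<Sum>j\<in>UNIV. complex_of_real (s$j) * a j))"
    and "integral\<^sup>L lborel (\<lambda>s::real^'m. indicator {s. \<forall>j. 0 < s$j} s *\<^sub>R exp (\<Sum>j\<in>UNIV. complex_of_real (s$j) * a j))
          = (\<Prod>j\<in>UNIV. - 1 / a j)"
proof -
  define ix where "ix b = (SOME j. b = axis j (1::real))" for b :: "real^'m"
  have ix: "ix (axis j 1) = j" for j
    unfolding ix_def by (rule some_equality) (auto simp: axis_eq_axis)
  define f where "f b t = indicator {0<..} t *\<^sub>R exp (complex_of_real t * a (ix b))" for b :: "real^'m" and t :: real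
  have eq: "indicator {s. \<forall>j. 0 < s$j} s *\<^sub>R exp (\<Sum>j\<in>UNIV. complex_of_real (s$j) * a j)
      = (\<Prod>b\<in>Basis. f b (s \<bullet> b))" for s :: "real^'m"
  proof -
    have "(\<Prod>b\<in>Basis. f b (s \<bullet> b)) = (\<Prod>j\<in>UNIV. indicator {0<..} (s$j) *\<^sub>R exp (complex_of_real (s$j) * a j))"
      by (simp add: prod_Basis_cart_gen f_def ix inner_axis)
    also have "\<dots> = indicator {s. \<forall>j. 0 < s$j} s *\<^sub>R exp (\<Sum>j\<in>UNIV. complex_of_real (s$j) * a j)"
    proof (cases "\<forall>j. 0 < s$j")
      case True
      then show ?thesis by (simp add: exp_sum)
    next
      case False
      then obtain j where j: "\<not> 0 < s$j" by auto
      have "(\<Prod>j\<in>UNIV. indicator {0<..} (s$j) *\<^sub>R exp (complex_of_real (s$j) * a j)) = 0"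
        by (rule prod_zero) (use j in \<open>auto intro!: exI[of _ j]\<close>)
      then show ?thesis using False by simp
    qed
    finally show ?thesis by simp
  qed
  have int: "integrable lborel (f b)" for b
    unfolding f_def by (rule exp_int_1d(1)[OF a])
  have val: "integral\<^sup>L lborel (f b) = - 1 / a (ix b)" for b
    unfolding f_def by (rule exp_int_1d(2)[OF a])
  show "integrable lborel (\<lambda>s::real^'m. indicator {s. \<forall>j. 0 < s$j} s *\<^sub>R exp (\<Sum>j\<in>UNIV. complex_of_real (s$j) * a j))"
    unfolding eq by (rule lborel_prod_euclid(1)[OF int])
  show "integral\<^sup>L lborel (\<lambda>s::real^'m. indicator {s. \<forall>j. 0 < s$j} s *\<^sub>R exp (\<Sum>j\<in>UNIV. complex_of_real (s$j) * a j))
          = (\<Prod>j\<in>UNIV. - 1 / a j)"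
    unfolding eq by (subst lborel_prod_euclid(2)[OF int]) (simp add: val prod_Basis_cart_gen ix)
qed


lemma CV_int:
  fixes \<Psi> :: "'a::euclidean_space \<Rightarrow> 'b::euclidean_space" and h :: "'b \<Rightarrow> complex"
  assumes M: "lborel = density (distr lborel borel \<Psi>) (\<lambda>_. ennreal d)" and d: "d > 0"
    and [measurable]: "\<Psi> \<in> borel_measurable borel" "h \<in> borel_measurable borel"
  shows "integrable lborel h \<longleftrightarrow> integrable lborel (\<lambda>s. h (\<Psi> s))"
    and "integral\<^sup>L lborel h = d *\<^sub>R integral\<^sup>L lborel (\<lambda>s. h (\<Psi> s))"
proof -
  have "integrable lborel h \<longleftrightarrow> integrable (density (distr lborel borel \<Psi>) (\<lambda>_. ennreal d)) h"
    by (rule arg_cong[where f="\<lambda>M. integrable M h", OF M])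
  also have "\<dots> \<longleftrightarrow> integrable (distr lborel borel \<Psi>) (\<lambda>x. d *\<^sub>R h x)"
    using d by (subst integrable_density) auto
  also have "\<dots> \<longleftrightarrow> integrable lborel (\<lambda>s. d *\<^sub>R h (\<Psi> s))"
    by (subst integrable_distr_eq) auto
  also have "\<dots> \<longleftrightarrow> integrable lborel (\<lambda>s. h (\<Psi> s))"
  proof
    assume "integrable lborel (\<lambda>s. d *\<^sub>R h (\<Psi> s))"
    then have "integrable lborel (\<lambda>s. inverse d *\<^sub>R (d *\<^sub>R h (\<Psi> s)))"
      by (rule integrable_scaleR_right)
    moreover have "d \<noteq> 0" using d by simp
    ultimately show "integrable lborel (\<lambda>s. h (\<Psi> s))" by simp
  qed auto
  finally show "integrable lborel h \<longleftrightarrow> integrable lborel (\<lambda>s. h (\<Psi> s))" .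
  have "integral\<^sup>L lborel h = integral\<^sup>L (density (distr lborel borel \<Psi>) (\<lambda>_. ennreal d)) h"
    by (rule arg_cong[where f="\<lambda>M. integral\<^sup>L M h", OF M])
  also have "\<dots> = integral\<^sup>L (distr lborel borel \<Psi>) (\<lambda>x. d *\<^sub>R h x)"
    using d by (subst integral_density) auto
  also have "\<dots> = integral\<^sup>L lborel (\<lambda>s. d *\<^sub>R h (\<Psi> s))"
    by (subst integral_distr) auto
  also have "\<dots> = d *\<^sub>R integral\<^sup>L lborel (\<lambda>s. h (\<Psi> s))"
    by simp
  finally show "integral\<^sup>L lborel h = d *\<^sub>R integral\<^sup>L lborel (\<lambda>s. h (\<Psi> s))" .
qed

lemma translate_int:
  fixes h :: "'b::euclidean_space \<Rightarrow> complex" and c :: 'b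
  assumes [measurable]: "h \<in> borel_measurable borel"
  shows "integrable lborel h \<longleftrightarrow> integrable lborel (\<lambda>y. h (c + y))"
    and "integral\<^sup>L lborel h = integral\<^sup>L lborel (\<lambda>y. h (c + y))"
proof -
  have M: "lborel = distr lborel borel ((+) c)" by (simp add: lborel_distr_plus)
  have "integrable lborel h \<longleftrightarrow> integrable (distr lborel borel ((+) c)) h"
    by (rule arg_cong[where f="\<lambda>M. integrable M h", OF M])
  also have "\<dots> \<longleftrightarrow> integrable lborel (\<lambda>y. h (c + y))"
    by (subst integrable_distr_eq) auto
  finally show "integrable lborel h \<longleftrightarrow> integrable lborel (\<lambda>y. h (c + y))" .
  have "integral\<^sup>L lborel h = integral\<^sup>L (distr lborel borel ((+) c)) h"
    by (rule arg_cong[where f="\<lambda>M. integral\<^sup>L M h", OF M])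
  also have "\<dots> = integral\<^sup>L lborel (\<lambda>y. h (c + y))"
    by (subst integral_distr) auto
  finally show "integral\<^sup>L lborel h = integral\<^sup>L lborel (\<lambda>y. h (c + y))" .
qed

lemma cdot_cvec_expand: "cdot \<rho> (cvec x) = (\<Sum>i\<in>UNIV. \<rho> $ i * complex_of_real (x $ i))"
  by (simp add: cdot_def cvec_def)

lemma cdot_cvec_linear:
  fixes \<Psi> :: "real^'m \<Rightarrow> real^'k"
  assumes "linear \<Psi>"
  shows "cdot \<rho> (cvec (\<Psi> s)) = (\<Sum>j\<in>UNIV. complex_of_real (s$j) * cdot \<rho> (cvec (\<Psi> (axis j 1))))"
proof -
  have "\<Psi> s = (\<Sum>j\<in>UNIV. s$j *\<^sub>R \<Psi> (axis j 1))"
  proof -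
    have "s = (\<Sum>j\<in>UNIV. s$j *\<^sub>R axis j 1)"
      using basis_expansion[of s] by (simp add: scalar_mult_eq_scaleR)
    then have "\<Psi> s = \<Psi> (\<Sum>j\<in>UNIV. s$j *\<^sub>R axis j 1)" by simp
    also have "\<dots> = (\<Sum>j\<in>UNIV. s$j *\<^sub>R \<Psi> (axis j 1))"
      using assms by (simp add: linear_sum linear_scale)
    finally show ?thesis .
  qed
  then have "cdot \<rho> (cvec (\<Psi> s)) = (\<Sum>i\<in>UNIV. \<rho> $ i * (\<Sum>j\<in>UNIV. complex_of_real (s$j) * complex_of_real (\<Psi> (axis j 1) $ i)))"
    by (simp add: cdot_cvec_expand sum_component)
  also have "\<dots> = (\<Sum>i\<in>UNIV. \<Sum>j\<in>UNIV. complex_of_real (s$j) * (\<rho> $ i * complex_of_real (\<Psi> (axis j 1) $ i)))"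
    by (simp add: sum_distrib_left mult.left_commute)
  also have "\<dots> = (\<Sum>j\<in>UNIV. \<Sum>i\<in>UNIV. complex_of_real (s$j) * (\<rho> $ i * complex_of_real (\<Psi> (axis j 1) $ i)))"
    by (rule sum.swap)
  also have "\<dots> = (\<Sum>j\<in>UNIV. complex_of_real (s$j) * cdot \<rho> (cvec (\<Psi> (axis j 1))))"
    by (simp add: cdot_cvec_expand sum_distrib_left)
  finally show ?thesis .
qed



lemma cone_integral:
  fixes e :: "'k::finite \<Rightarrow> 'm::{finite,wellorder}" and L :: "real^'m::_ \<Rightarrow> real^'m::_"
    and \<rho> :: "complex^'k" and xc :: "real^'k"
  assumes e: "bij e" and L: "linear L" and d: "det (matrix L) \<noteq> 0"
    and neg: "\<And>j. Re (cdot \<rho> (cvec (perm_vec e (L (axis j 1))))) < 0"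
  defines "P \<equiv> {x. \<exists>s. (\<forall>j. 0 < s$j) \<and> x = xc + perm_vec e (L s)}"
  shows "(\<lambda>x. exp (cdot \<rho> (cvec (x - xc)))) integrable_on P"
    and "integral P (\<lambda>x. exp (cdot \<rho> (cvec (x - xc))))
       = complex_of_real \<bar>det (matrix L)\<bar> * (\<Prod>j\<in>UNIV. - 1 / cdot \<rho> (cvec (perm_vec e (L (axis j 1)))))"
proof -
  define \<Psi> where "\<Psi> = perm_vec e \<circ> L"
  have lPsi: "linear \<Psi>" unfolding \<Psi>_def by (rule linear_compose[OF L linear_perm_vec])
  obtain Li where Li: "linear Li" "\<And>x. Li (L x) = x" "\<And>x. L (Li x) = x"
    using linear_injective_isomorphism[OF L] det_nz_iff_inj[OF L] d by metis
  define \<Phi> where "\<Phi> y = Li (perm_vec (inv e) y)" for y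
  have lPhi: "linear \<Phi>" unfolding \<Phi>_def
    using linear_compose[OF linear_perm_vec Li(1)] by (simp add: o_def)
  have PhiPsi: "\<Phi> (\<Psi> s) = s" for s
    by (simp add: \<Phi>_def \<Psi>_def perm_vec_inv[OF e] Li)
  have PsiPhi: "\<Psi> (\<Phi> y) = y" for y
    by (simp add: \<Phi>_def \<Psi>_def perm_vec_inv2[OF e] Li)
  define Orth where "Orth = {s::real^'m::_. \<forall>j. 0 < s$j}"
  have Orth_open: "open Orth"
  proof -
    have "Orth = (\<Inter>j\<in>(UNIV::'m set). {s. axis j 1 \<bullet> s > 0})"
      by (auto simp: Orth_def inner_axis')
    also have "open \<dots>"
      by (rule open_INT) (simp_all add: open_halfspace_gt)
    finally show ?thesis .
  qed
  have contPhi: "continuous_on UNIV \<Phi>"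
    using lPhi by (simp add: linear_continuous_on linear_conv_bounded_linear)
  have contPsi: "continuous_on UNIV \<Psi>"
    using lPsi by (simp add: linear_continuous_on linear_conv_bounded_linear)
  have Phim[measurable]: "\<Phi> \<in> borel_measurable borel"
    by (rule borel_measurable_continuous_onI[OF contPhi])
  have Psim[measurable]: "\<Psi> \<in> borel_measurable borel"
    by (rule borel_measurable_continuous_onI[OF contPsi])
  have Orthm[measurable]: "Orth \<in> sets borel" using Orth_open by simp
  have P_eq: "P = {x. \<Phi> (x - xc) \<in> Orth}"
  proof (intro set_eqI iffI)
    fix x assume "x \<in> P"
    then obtain s where "s \<in> Orth" "x = xc + \<Psi> s" by (auto simp: P_def Orth_def \<Psi>_def)
    then show "x \<in> {x. \<Phi> (x - xc) \<in> Orth}" by (simp add: PhiPsi)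
  next
    fix x assume "x \<in> {x. \<Phi> (x - xc) \<in> Orth}"
    then have "\<Phi> (x - xc) \<in> Orth" by simp
    moreover have "x = xc + \<Psi> (\<Phi> (x - xc))" by (simp add: PsiPhi)
    ultimately show "x \<in> P" unfolding P_def Orth_def \<Psi>_def by auto
  qed
  define F where "F x = exp (cdot \<rho> (cvec (x - xc)))" for x
  have Fm[measurable]: "F \<in> borel_measurable borel"
  proof -
    have [measurable]: "(\<lambda>x::real^'k. x $ i) \<in> borel_measurable borel" for i
      by (intro borel_measurable_continuous_onI continuous_intros)
    show ?thesis
      unfolding F_def cdot_cvec_expand vector_minus_component by measurable
  qed
  define h where "h x = indicator P x *\<^sub>R F x" for x
  have hm[measurable]: "h \<in> borel_measurable borel"
    unfolding h_def P_eq by measurable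
  define a where "a j = cdot \<rho> (cvec (\<Psi> (axis j 1)))" for j
  have a_neg: "Re (a j) < 0" for j using neg[of j] by (simp add: a_def \<Psi>_def)
  define g where "g s = indicator Orth s *\<^sub>R exp (\<Sum>j\<in>UNIV. complex_of_real (s$j) * a j)" for s
  have hg: "h (xc + \<Psi> s) = g s" for s
  proof -
    have c: "cdot \<rho> (cvec (\<Psi> s)) = (\<Sum>j\<in>UNIV. complex_of_real (s$j) * a j)"
      unfolding a_def by (rule cdot_cvec_linear[OF lPsi])
    have i: "indicator P (xc + \<Psi> s) = (indicator Orth s :: real)"
      by (simp add: P_eq PhiPsi indicator_def)
    show ?thesis unfolding h_def g_def F_def i by (simp add: c)
  qed
  have M: "lborel = density (distr lborel borel \<Psi>) (\<lambda>_. ennreal \<bar>det (matrix L)\<bar>)"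
    unfolding \<Psi>_def by (rule CV[OF e L d])
  have dpos: "\<bar>det (matrix L)\<bar> > 0" using d by simp
  have h2m[measurable]: "(\<lambda>y. h (xc + y)) \<in> borel_measurable borel" by measurable
  have ig: "integrable lborel g" and vg: "integral\<^sup>L lborel g = (\<Prod>j\<in>UNIV. - 1 / a j)"
    unfolding g_def Orth_def using orthant_exp[OF a_neg] by auto
  have ih: "integrable lborel h"
    unfolding translate_int(1)[OF hm, of xc] CV_int(1)[OF M dpos Psim h2m] hg using ig .
  have vh: "integral\<^sup>L lborel h = \<bar>det (matrix L)\<bar> *\<^sub>R (\<Prod>j\<in>UNIV. - 1 / a j)"
    unfolding translate_int(2)[OF hm, of xc] CV_int(2)[OF M dpos Psim h2m] hg vg ..
  have hh: "h = (\<lambda>x. indicator P x *\<^sub>R F x)" by (simp add: h_def fun_eq_iff)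
  have si: "set_integrable lborel P F"
    using ih unfolding set_integrable_def hh .
  show "(\<lambda>x. exp (cdot \<rho> (cvec (x - xc)))) integrable_on P"
    using set_borel_integral_eq_integral(1)[OF si] by (simp add: F_def[abs_def])
  have "integral P F = set_lebesgue_integral lborel P F"
    using set_borel_integral_eq_integral(2)[OF si] by simp
  also have "\<dots> = integral\<^sup>L lborel h"
    by (simp add: set_lebesgue_integral_def hh)
  finally show "integral P (\<lambda>x. exp (cdot \<rho> (cvec (x - xc))))
       = complex_of_real \<bar>det (matrix L)\<bar> * (\<Prod>j\<in>UNIV. - 1 / cdot \<rho> (cvec (perm_vec e (L (axis j 1)))))"
    by (simp add: vh F_def[abs_def] a_def \<Psi>_def scaleR_conv_of_real)
qed



definition rho :: "real^'n \<Rightarrow> real^'n \<Rightarrow> real \<Rightarrow> real \<Rightarrow> complex^'n" where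
  "rho v w k \<tau> = (\<chi> i. Complex (- \<tau> * v$i) (sqrt (\<tau>\<^sup>2 + k\<^sup>2) * w$i))"

lemma sum_sq_norm: "(\<Sum>i\<in>UNIV. (v::real^'n)$i * v$i) = (norm v)\<^sup>2"
  by (simp add: power2_norm_eq_inner inner_vec_def)

lemma rho_cdot:
  assumes v: "norm v = 1" and w: "norm w = 1" and vw: "v \<bullet> w = 0"
  shows "cdot (rho v w k \<tau>) (rho v w k \<tau>) + complex_of_real (k\<^sup>2) = 0"
proof -
  let ?s = "sqrt (\<tau>\<^sup>2 + k\<^sup>2)"
  have s2: "?s\<^sup>2 = \<tau>\<^sup>2 + k\<^sup>2" by simp
  have vv: "(\<Sum>i\<in>UNIV. v$i * v$i) = 1" using v by (simp add: sum_sq_norm)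
  have ww: "(\<Sum>i\<in>UNIV. w$i * w$i) = 1" using w by (simp add: sum_sq_norm)
  have vw': "(\<Sum>i\<in>UNIV. v$i * w$i) = 0" using vw by (simp add: inner_vec_def)
  have "Re (cdot (rho v w k \<tau>) (rho v w k \<tau>)) = (\<Sum>i\<in>UNIV. \<tau>\<^sup>2 * (v$i * v$i) - ?s\<^sup>2 * (w$i * w$i))"
    by (simp add: cdot_def rho_def Re_sum power2_eq_square algebra_simps)
  also have "\<dots> = \<tau>\<^sup>2 * (\<Sum>i\<in>UNIV. v$i * v$i) - ?s\<^sup>2 * (\<Sum>i\<in>UNIV. w$i * w$i)"
    by (simp add: sum_subtractf sum_distrib_left)
  also have "\<dots> = - k\<^sup>2" using vv ww s2 by simp
  finally have re: "Re (cdot (rho v w k \<tau>) (rho v w k \<tau>)) = - k\<^sup>2" .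
  have "Im (cdot (rho v w k \<tau>) (rho v w k \<tau>)) = (\<Sum>i\<in>UNIV. (- 2 * \<tau> * ?s) * (v$i * w$i))"
    by (simp add: cdot_def rho_def Im_sum algebra_simps)
  also have "\<dots> = (- 2 * \<tau> * ?s) * (\<Sum>i\<in>UNIV. v$i * w$i)" by (simp only: sum_distrib_left)
  also have "\<dots> = 0" by (simp add: vw')
  finally have im: "Im (cdot (rho v w k \<tau>) (rho v w k \<tau>)) = 0" .
  show ?thesis using re im by (simp add: complex_eq_iff)
qed

lemma Re_vec_rho: "Re_vec (rho v w k \<tau>) = (- \<tau>) *\<^sub>R v"
  by (simp add: Re_vec_def rho_def vec_eq_iff)

lemma Re_cdot_cvec: "Re (cdot \<rho> (cvec x)) = Re_vec \<rho> \<bullet> x"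
  by (simp add: cdot_def cvec_def Re_vec_def inner_vec_def Re_sum)

lemma norm_rho:
  assumes v: "norm v = 1" and w: "norm w = 1"
  shows "norm (rho v w k \<tau>) = sqrt (2 * \<tau>\<^sup>2 + k\<^sup>2)"
proof -
  have vv: "(\<Sum>i\<in>UNIV. (v$i)\<^sup>2) = 1" using v sum_sq_norm[of v] by (simp add: power2_eq_square)
  have ww: "(\<Sum>i\<in>UNIV. (w$i)\<^sup>2) = 1" using w sum_sq_norm[of w] by (simp add: power2_eq_square)
  have "(\<Sum>i\<in>UNIV. (cmod (rho v w k \<tau> $ i))\<^sup>2) = (\<Sum>i\<in>UNIV. \<tau>\<^sup>2 * (v$i)\<^sup>2 + (\<tau>\<^sup>2 + k\<^sup>2) * (w$i)\<^sup>2)"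
    by (simp add: rho_def cmod_def power_mult_distrib)
  also have "\<dots> = \<tau>\<^sup>2 * (\<Sum>i\<in>UNIV. (v$i)\<^sup>2) + (\<tau>\<^sup>2 + k\<^sup>2) * (\<Sum>i\<in>UNIV. (w$i)\<^sup>2)"
    by (simp add: sum.distrib sum_distrib_left)
  also have "\<dots> = 2 * \<tau>\<^sup>2 + k\<^sup>2" using vv ww by simp
  finally show ?thesis by (simp add: norm_vec_def L2_set_def)
qed

lemma cdot_cvec_bound: "cmod (cdot \<rho> (cvec x)) \<le> norm \<rho> * norm x"
proof -
  define p where "p = (\<chi> i. cmod (\<rho> $ i))"
  define q where "q = (\<chi> i. \<bar>x $ i\<bar>)"
  have "cmod (cdot \<rho> (cvec x)) \<le> (\<Sum>i\<in>UNIV. cmod (\<rho> $ i * complex_of_real (x $ i)))"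
    unfolding cdot_cvec_expand by (rule norm_sum)
  also have "\<dots> = p \<bullet> q"
    by (simp add: p_def q_def inner_vec_def norm_mult)
  also have "\<dots> \<le> norm p * norm q" by (rule norm_cauchy_schwarz)
  also have "norm p = norm \<rho>" by (simp add: p_def norm_vec_def)
  also have "norm q = norm x" by (simp add: q_def norm_vec_def)
  finally show ?thesis .
qed



lemma assemble:
  fixes e :: "'n::finite \<Rightarrow> 'm::{finite,wellorder}" and L :: "real^'m::_ \<Rightarrow> real^'m::_"
    and v w xc :: "real^'n"
  assumes e: "bij e" and L: "linear L" and d: "det (matrix L) \<noteq> 0"
    and P: "P = {x. \<exists>s. (\<forall>j. 0 < s$j) \<and> x = xc + perm_vec e (L s)}"
    and PQ: "P \<subseteq> spherical_cone xc v \<theta>" and v: "norm v = 1" and w: "norm w = 1" and vw: "v \<bullet> w = 0"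
    and th: "0 < \<theta>" "\<theta> < pi/2" and tau: "0 < \<tau>" "k \<le> \<tau>" and k: "0 < k"
  shows "(\<lambda>x. exp (cdot (rho v w k \<tau>) (cvec (x - xc)))) integrable_on P"
    and "\<bar>det (matrix L)\<bar> / ((2*\<tau>)^CARD('m) * (\<Prod>j\<in>UNIV. norm (perm_vec e (L (axis j 1)))))
         \<le> norm (integral P (\<lambda>x. exp (cdot (rho v w k \<tau>) (cvec (x - xc)))))"
proof -
  define \<rho> where "\<rho> = rho v w k \<tau>"
  define \<Psi> where "\<Psi> = perm_vec e \<circ> L"
  have lPsi: "linear \<Psi>" unfolding \<Psi>_def by (rule linear_compose[OF L linear_perm_vec])
  define m where "m j = \<Psi> (axis j 1)" for j
  have injL: "inj L" using det_nz_iff_inj[OF L] d by simp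
  have m0: "m j \<noteq> 0" for j
  proof
    assume "m j = 0"
    then have "perm_vec (inv e) (perm_vec e (L (axis j 1))) = perm_vec (inv e) 0"
      by (simp add: m_def \<Psi>_def)
    moreover have "perm_vec (inv e) (0::real^'n) = 0" by (simp add: vec_eq_iff)
    ultimately have "L (axis j 1) = 0" by (simp only: perm_vec_inv[OF e])
    then have "L (axis j 1) = L 0" using L by (simp add: linear_0)
    then have "axis j (1::real) = 0" using injL by (simp add: inj_eq)
    then show False by (simp add: axis_eq_0_iff)
  qed
  have cth: "0 < cos \<theta>" using th by (simp add: cos_gt_zero)
  have vm: "cos \<theta> * norm (m j) \<le> v \<bullet> m j" for j
  proof -
    define S where "S = \<Psi> (\<chi> i. 1)"
    define f where "f \<epsilon> = v \<bullet> (m j + \<epsilon> *\<^sub>R S) - cos \<theta> * norm (m j + \<epsilon> *\<^sub>R S)" for \<epsilon> :: real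
    have "(f \<longlongrightarrow> f 0) (at_right 0)"
      unfolding f_def by (intro tendsto_intros)
    moreover have "eventually (\<lambda>\<epsilon>. 0 \<le> f \<epsilon>) (at_right 0)"
    proof (rule eventually_at_rightI[of 0 1])
      fix \<epsilon> :: real assume "\<epsilon> \<in> {0<..<1}"
      then have ep: "0 < \<epsilon>" by simp
      define s where "s = axis j 1 + \<epsilon> *\<^sub>R (\<chi> i. (1::real))"
      have sp: "\<forall>i. 0 < s$i" using ep by (auto simp: s_def axis_def)
      have Ps: "\<Psi> s = m j + \<epsilon> *\<^sub>R S"
        using lPsi by (simp add: s_def m_def S_def linear_add linear_scale)
      have "xc + \<Psi> s \<in> P" unfolding P using sp by (auto simp: \<Psi>_def)
      then have "xc + \<Psi> s \<in> spherical_cone xc v \<theta>" using PQ by auto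
      then have "(\<Psi> s) \<bullet> v > norm (\<Psi> s) * cos \<theta>" by (simp add: spherical_cone_def)
      then show "0 \<le> f \<epsilon>" by (simp add: f_def Ps inner_commute mult.commute)
    qed simp
    ultimately have "0 \<le> f 0" by (rule tendsto_lowerbound) simp
    then show ?thesis by (simp add: f_def)
  qed
  have neg: "Re (cdot \<rho> (cvec (perm_vec e (L (axis j 1))))) < 0" for j
  proof -
    have "Re (cdot \<rho> (cvec (m j))) = - \<tau> * (v \<bullet> m j)"
      by (simp add: Re_cdot_cvec \<rho>_def Re_vec_rho)
    moreover have "0 < v \<bullet> m j"
    proof -
      have "0 < norm (m j)" using m0[of j] by simp
      then have "0 < cos \<theta> * norm (m j)" using cth by simp
      then show ?thesis using vm[of j] by linarith
    qed
    ultimately show ?thesis using tau by (simp add: m_def \<Psi>_def mult_pos_pos)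
  qed
  note CI = cone_integral[OF e L d neg, of xc, folded P]
  show "(\<lambda>x. exp (cdot (rho v w k \<tau>) (cvec (x - xc)))) integrable_on P"
    using CI(1) by (simp add: \<rho>_def)
  define a where "a j = cdot \<rho> (cvec (m j))" for j
  have a0: "a j \<noteq> 0" for j using neg[of j] by (auto simp: a_def m_def \<Psi>_def)
  have nrho: "norm \<rho> \<le> 2 * \<tau>"
  proof -
    have "norm \<rho> = sqrt (2 * \<tau>\<^sup>2 + k\<^sup>2)" by (simp add: \<rho>_def norm_rho[OF v w])
    also have "\<dots> \<le> sqrt ((2 * \<tau>)\<^sup>2)"
    proof (intro real_sqrt_le_mono)
      have "k * k \<le> \<tau> * \<tau>" using tau k by (intro mult_mono) auto
      moreover have "(2*\<tau>)\<^sup>2 = 4*(\<tau>*\<tau>)" "\<tau>\<^sup>2 = \<tau>*\<tau>" "k\<^sup>2 = k*k" by (simp_all add: power2_eq_square)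
      moreover have "0 \<le> \<tau>*\<tau>" by simp
      ultimately show "2 * \<tau>\<^sup>2 + k\<^sup>2 \<le> (2 * \<tau>)\<^sup>2" by linarith
    qed
    also have "\<dots> = 2 * \<tau>" using tau by (subst real_sqrt_abs) simp
    finally show ?thesis .
  qed
  have abound: "cmod (a j) \<le> 2 * \<tau> * norm (m j)" for j
    using cdot_cvec_bound[of \<rho> "m j"] nrho
    by (simp add: a_def) (meson mult_right_mono norm_ge_zero order_trans)
  have "(\<Prod>j\<in>UNIV. cmod (a j)) \<le> (\<Prod>j\<in>UNIV. 2 * \<tau> * norm (m j))"
    by (rule prod_mono) (simp add: abound)
  also have "\<dots> = (2*\<tau>)^CARD('m) * (\<Prod>j\<in>UNIV. norm (m j))"
    by (simp add: prod.distrib)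
  finally have pb: "(\<Prod>j\<in>UNIV. cmod (a j)) \<le> (2*\<tau>)^CARD('m) * (\<Prod>j\<in>UNIV. norm (m j))" .
  have ppos: "0 < (\<Prod>j\<in>UNIV. cmod (a j))" using a0 by (simp add: prod_pos)
  have "integral P (\<lambda>x. exp (cdot (rho v w k \<tau>) (cvec (x - xc))))
        = complex_of_real \<bar>det (matrix L)\<bar> * (\<Prod>j\<in>UNIV. - 1 / a j)"
    using CI(2) by (simp add: \<rho>_def a_def m_def \<Psi>_def)
  then have "norm (integral P (\<lambda>x. exp (cdot (rho v w k \<tau>) (cvec (x - xc)))))
        = \<bar>det (matrix L)\<bar> / (\<Prod>j\<in>UNIV. cmod (a j))"
    by (simp add: norm_mult prod_norm[symmetric] norm_divide prod_dividef)
  moreover have "\<bar>det (matrix L)\<bar> / ((2*\<tau>)^CARD('m) * (\<Prod>j\<in>UNIV. norm (m j)))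
      \<le> \<bar>det (matrix L)\<bar> / (\<Prod>j\<in>UNIV. cmod (a j))"
    by (rule divide_left_mono[OF pb]) (use ppos pb in auto)
  ultimately show "\<bar>det (matrix L)\<bar> / ((2*\<tau>)^CARD('m) * (\<Prod>j\<in>UNIV. norm (perm_vec e (L (axis j 1)))))
         \<le> norm (integral P (\<lambda>x. exp (cdot (rho v w k \<tau>) (cvec (x - xc)))))"
    by (simp add: m_def \<Psi>_def)
qed



lemma inner_perm_vec:
  fixes e :: "'b::finite \<Rightarrow> 'a::finite"
  assumes "bij e"
  shows "perm_vec e x \<bullet> perm_vec e y = x \<bullet> y"
proof -
  have "perm_vec e x \<bullet> perm_vec e y = (\<Sum>j\<in>UNIV. x $ e j * y $ e j)"
    by (simp add: inner_vec_def)
  also have "\<dots> = (\<Sum>i\<in>UNIV. x $ i * y $ i)"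
    using assms by (intro sum.reindex_bij_betw) (simp add: bij_betw_def)
  finally show ?thesis by (simp add: inner_vec_def)
qed

lemma norm_perm_vec: "bij e \<Longrightarrow> norm (perm_vec e x) = norm x"
  by (simp add: norm_eq_sqrt_inner inner_perm_vec)

lemma orth_perm_vec: "bij e \<Longrightarrow> orthogonal_transformation (perm_vec e)"
  by (simp add: orthogonal_transformation_def linear_perm_vec inner_perm_vec)

lemma sin_ge_min:
  assumes "0 \<le> a" "a \<le> x" "x \<le> b" "b \<le> pi"
  shows "min (sin a) (sin b) \<le> sin x"
proof (cases "x \<le> pi/2")
  case True
  then have "sin a \<le> sin x" using assms by (intro sin_monotone_2pi_le) auto
  then show ?thesis by simp
next
  case False
  have "sin (pi - b) \<le> sin (pi - x)" using assms False by (intro sin_monotone_2pi_le) auto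
  then show ?thesis by simp
qed



lemma perm_vec_lin2: "perm_vec e (a *\<^sub>R x + b *\<^sub>R y) = a *\<^sub>R perm_vec e x + b *\<^sub>R perm_vec e y"
  by (simp add: vec_eq_iff)

lemma norm2_2: "(norm (x::real^2))\<^sup>2 = (x$1)\<^sup>2 + (x$2)\<^sup>2"
  by (simp add: norm_vec_def L2_set_def sum_2)

lemma case2:
  fixes u w v z xc :: "real^'n"
  assumes card: "CARD('n) = 2"
    and P: "P = {xc + s *\<^sub>R u + t *\<^sub>R w | s t. 0 < s \<and> 0 < t}" and u: "u \<noteq> 0" and w: "w \<noteq> 0"
    and ang: "a \<le> arccos ((u \<bullet> w) / (norm u * norm w))" "arccos ((u \<bullet> w) / (norm u * norm w)) \<le> b"
       "0 < a" "b < pi"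
    and PQ: "P \<subseteq> spherical_cone xc v \<theta>" and v: "norm v = 1" and z: "norm z = 1" and vz: "v \<bullet> z = 0"
    and th: "0 < \<theta>" "\<theta> < pi/2" and tau: "0 < \<tau>" "k \<le> \<tau>" and k: "0 < k"
  shows "(\<lambda>x. exp (cdot (rho v z k \<tau>) (cvec (x - xc)))) integrable_on P"
    and "min (sin a) (sin b) / (4 * \<tau>^2) \<le> norm (integral P (\<lambda>x. exp (cdot (rho v z k \<tau>) (cvec (x - xc)))))"
proof -
  obtain e :: "'n \<Rightarrow> 2" where e: "bij e"
    using finite_same_card_bij[of "UNIV::'n set" "UNIV::2 set"] card by auto
  define u' where "u' = perm_vec (inv e) u"
  define w' where "w' = perm_vec (inv e) w"
  define L where "L s = (s$1) *\<^sub>R u' + (s$2) *\<^sub>R w'" for s :: "real^2"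
  have L: "linear L" by (auto simp: linear_iff L_def algebra_simps)
  have hPL: "perm_vec e (L s) = (s$1) *\<^sub>R u + (s$2) *\<^sub>R w" for s
    by (simp add: L_def perm_vec_lin2 u'_def w'_def perm_vec_inv2[OF e])
  have P': "P = {x. \<exists>s. (\<forall>j. 0 < s$j) \<and> x = xc + perm_vec e (L s)}"
  proof (intro set_eqI iffI)
    fix x assume "x \<in> P"
    then obtain s t where st: "0 < s" "0 < t" "x = xc + s *\<^sub>R u + t *\<^sub>R w" by (auto simp: P)
    show "x \<in> {x. \<exists>s. (\<forall>j. 0 < s$j) \<and> x = xc + perm_vec e (L s)}"
      using st by (auto simp: hPL forall_2 intro!: exI[of _ "vector [s, t]"])
  next
    fix x assume "x \<in> {x. \<exists>s. (\<forall>j. 0 < s$j) \<and> x = xc + perm_vec e (L s)}"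
    then obtain s :: "real^2" where "\<forall>j. 0 < s$j" "x = xc + perm_vec e (L s)" by auto
    then show "x \<in> P" by (auto simp: P hPL forall_2 add.assoc)
  qed
  have L1: "L (axis 1 1) = u'" and L2: "L (axis 2 1) = w'"
    by (simp_all add: L_def axis_def)
  have detL: "det (matrix L) = u'$1 * w'$2 - w'$1 * u'$2"
    by (simp add: det_2 matrix_def L1 L2)
  have nu: "norm u' = norm u" and nw: "norm w' = norm w" and uw: "u' \<bullet> w' = u \<bullet> w"
    using bij_imp_bij_inv[OF e] by (simp_all add: u'_def w'_def norm_perm_vec inner_perm_vec)
  have lag: "(det (matrix L))\<^sup>2 = (norm u)\<^sup>2 * (norm w)\<^sup>2 - (u \<bullet> w)\<^sup>2"
  proof -
    have "(norm u')\<^sup>2 = (u'$1)\<^sup>2 + (u'$2)\<^sup>2" "(norm w')\<^sup>2 = (w'$1)\<^sup>2 + (w'$2)\<^sup>2"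
      "u' \<bullet> w' = u'$1 * w'$1 + u'$2 * w'$2"
      by (simp_all only: norm2_2) (simp add: inner_vec_def sum_2)
    then show ?thesis unfolding detL nu[symmetric] nw[symmetric] uw[symmetric]
      by (simp add: power2_eq_square algebra_simps)
  qed
  define c where "c = (u \<bullet> w) / (norm u * norm w)"
  have nuw: "0 < norm u * norm w" using u w by simp
  have cabs: "\<bar>c\<bar> \<le> 1"
  proof -
    have "\<bar>c\<bar> = \<bar>u \<bullet> w\<bar> / (norm u * norm w)"
      using nuw unfolding c_def by (simp add: abs_divide)
    also have "\<dots> \<le> 1"
      using Cauchy_Schwarz_ineq2[of u w] nuw by (subst divide_le_eq) simp_all
    finally show ?thesis .
  qed
  define \<beta> where "\<beta> = arccos c"
  have cb: "cos \<beta> = c" using cabs by (simp add: \<beta>_def cos_arccos_abs)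
  have uwc: "u \<bullet> w = c * (norm u * norm w)"
  proof -
    have "\<And>x n. 0 < (n::real) \<Longrightarrow> x = (x / n) * n" by simp
    from this[OF nuw, of "u \<bullet> w"] show ?thesis by (simp only: c_def)
  qed
  have det2: "(det (matrix L))\<^sup>2 = (norm u * norm w * sin \<beta>)\<^sup>2"
  proof -
    have "(det (matrix L))\<^sup>2 = (norm u * norm w)\<^sup>2 * (1 - c\<^sup>2)"
      unfolding lag uwc by (simp add: power_mult_distrib right_diff_distrib)
    also have "1 - c\<^sup>2 = (sin \<beta>)\<^sup>2" by (simp add: sin_squared_eq cb)
    finally show ?thesis by (simp add: power_mult_distrib)
  qed
  define s0 where "s0 = min (sin a) (sin b)"
  have ab: "a \<le> b" using ang by linarith
  have s0pos: "0 < s0"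
  proof -
    have "0 < sin a" using ang ab by (intro sin_gt_zero) auto
    moreover have "0 < sin b" using ang ab by (intro sin_gt_zero) auto
    ultimately show ?thesis by (simp add: s0_def)
  qed
  have sb: "s0 \<le> sin \<beta>"
    unfolding s0_def
  proof (rule sin_ge_min)
    show "a \<le> \<beta>" "\<beta> \<le> b" using ang by (simp_all add: \<beta>_def c_def)
  qed (use ang in auto)
  have dge: "norm u * norm w * s0 \<le> \<bar>det (matrix L)\<bar>"
  proof (rule power2_le_imp_le)
    have "(norm u * norm w * s0)\<^sup>2 \<le> (norm u * norm w * sin \<beta>)\<^sup>2"
      using sb s0pos nuw by (intro power_mono mult_left_mono) auto
    then show "(norm u * norm w * s0)\<^sup>2 \<le> \<bar>det (matrix L)\<bar>\<^sup>2" by (simp add: det2)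
  qed simp
  have d: "det (matrix L) \<noteq> 0"
  proof -
    have "0 < norm u * norm w * s0" using s0pos nuw by simp
    then show ?thesis using dge by linarith
  qed
  note A = assemble[OF e L d P' PQ v z vz th tau k]
  show "(\<lambda>x. exp (cdot (rho v z k \<tau>) (cvec (x - xc)))) integrable_on P" by (rule A(1))
  have pr: "(\<Prod>j\<in>UNIV. norm (perm_vec e (L (axis j (1::real))))) = norm u * norm w"
    by (simp add: UNIV_2 hPL axis_def)
  have "min (sin a) (sin b) / (4 * \<tau>^2) = norm u * norm w * s0 / ((2*\<tau>)^CARD(2) * (norm u * norm w))"
    using u w by (simp add: s0_def power2_eq_square)
  also have "\<dots> \<le> \<bar>det (matrix L)\<bar> / ((2*\<tau>)^CARD(2) * (norm u * norm w))"
    using dge nuw tau by (intro divide_right_mono) auto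
  also have "\<dots> \<le> norm (integral P (\<lambda>x. exp (cdot (rho v z k \<tau>) (cvec (x - xc)))))"
    using A(2) by (simp add: pr)
  finally show "min (sin a) (sin b) / (4 * \<tau>^2) \<le> norm (integral P (\<lambda>x. exp (cdot (rho v z k \<tau>) (cvec (x - xc)))))" .
qed



lemma case3:
  fixes v z xc :: "real^'n" and f :: "real^'n \<Rightarrow> real^'n"
  assumes card: "CARD('n) = 3" and f: "rigid_motion f" "f xc = 0" "f ` P = {y. \<forall>i. 0 < y$i}"
    and PQ: "P \<subseteq> spherical_cone xc v \<theta>" and v: "norm v = 1" and z: "norm z = 1" and vz: "v \<bullet> z = 0"
    and th: "0 < \<theta>" "\<theta> < pi/2" and tau: "0 < \<tau>" "k \<le> \<tau>" and k: "0 < k"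
  shows "(\<lambda>x. exp (cdot (rho v z k \<tau>) (cvec (x - xc)))) integrable_on P"
    and "1 / (8 * \<tau>^3) \<le> norm (integral P (\<lambda>x. exp (cdot (rho v z k \<tau>) (cvec (x - xc)))))"
proof -
  obtain A b where A: "orthogonal_matrix A" and fdef: "f = (\<lambda>x. A *v x + b)"
    using f(1) unfolding rigid_motion_def by auto
  have AT: "transpose A ** A = mat 1" "A ** transpose A = mat 1"
    using A by (simp_all add: orthogonal_matrix_def)
  have bdef: "b = - (A *v xc)" using f(2) by (simp add: fdef eq_neg_iff_add_eq_0 add.commute)
  have fx: "f x = A *v (x - xc)" for x
    by (simp add: fdef bdef matrix_vector_mult_diff_distrib)
  have ATA: "transpose A *v (A *v y) = y" for y
    by (simp add: matrix_vector_mul_assoc AT)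
  have AAT: "A *v (transpose A *v y) = y" for y
    by (simp only: matrix_vector_mul_assoc AT matrix_vector_mul_lid)
  obtain e :: "'n \<Rightarrow> 3" where e: "bij e"
    using finite_same_card_bij[of "UNIV::'n set" "UNIV::3 set"] card by auto
  define L where "L s = perm_vec (inv e) (transpose A *v perm_vec e s)" for s :: "real^3"
  have hPL: "perm_vec e (L s) = transpose A *v perm_vec e s" for s
    by (simp add: L_def perm_vec_inv2[OF e])
  have oT: "orthogonal_transformation (\<lambda>x. transpose A *v x)"
    unfolding orthogonal_transformation_matrix matrix_of_matrix_vector_mul
    using A by (simp add: orthogonal_matrix_transpose del: transpose_matrix_vector)
  have oL: "orthogonal_transformation L"
  proof -
    have "L = perm_vec (inv e) \<circ> ((\<lambda>x. transpose A *v x) \<circ> perm_vec e)"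
      by (simp add: L_def fun_eq_iff)
    then show ?thesis
      using orth_perm_vec[OF e] orth_perm_vec[OF bij_imp_bij_inv[OF e]] oT
      by (simp add: orthogonal_transformation_compose)
  qed
  have L: "linear L" using oL by (simp add: orthogonal_transformation_def)
  have d1: "\<bar>det (matrix L)\<bar> = 1" by (rule orthogonal_transformation_det[OF oL])
  then have d: "det (matrix L) \<noteq> 0" by auto
  have finj: "f x = f x' \<Longrightarrow> x = x'" for x x'
  proof -
    assume "f x = f x'"
    then have "transpose A *v (A *v (x - xc)) = transpose A *v (A *v (x' - xc))" by (simp only: fx)
    then have "x - xc = x' - xc" by (simp only: ATA)
    then show "x = x'" by simp
  qed
  have P': "P = {x. \<exists>s. (\<forall>j. 0 < s$j) \<and> x = xc + perm_vec e (L s)}"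
  proof (intro set_eqI iffI)
    fix x assume xP: "x \<in> P"
    define y where "y = A *v (x - xc)"
    have ypos: "\<forall>i. 0 < y$i" using xP f(3) by (auto simp: y_def fx[symmetric])
    define s where "s = perm_vec (inv e) y"
    have "\<forall>j. 0 < s$j" using ypos by (simp add: s_def)
    moreover have "x = xc + perm_vec e (L s)"
      by (simp add: hPL s_def perm_vec_inv2[OF e] y_def ATA del: transpose_matrix_vector)
    ultimately show "x \<in> {x. \<exists>s. (\<forall>j. 0 < s$j) \<and> x = xc + perm_vec e (L s)}" by auto
  next
    fix x assume "x \<in> {x. \<exists>s. (\<forall>j. 0 < s$j) \<and> x = xc + perm_vec e (L s)}"
    then obtain s where s: "\<forall>j. 0 < s$j" "x = xc + perm_vec e (L s)" by auto
    have "f x = perm_vec e s" by (simp add: fx s(2) hPL AAT del: transpose_matrix_vector)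
    then have "f x \<in> f ` P" using s(1) f(3) by auto
    then obtain x' where "x' \<in> P" "f x' = f x" by auto
    then have "x' = x" using finj by blast
    then show "x \<in> P" using \<open>x' \<in> P\<close> by simp
  qed
  note As = assemble[OF e L d P' PQ v z vz th tau k]
  show "(\<lambda>x. exp (cdot (rho v z k \<tau>) (cvec (x - xc)))) integrable_on P" by (rule As(1))
  have pr: "(\<Prod>j\<in>UNIV. norm (perm_vec e (L (axis j (1::real))))) = 1"
  proof -
    have "norm (perm_vec e (L (axis j (1::real)))) = 1" for j
      using orthogonal_transformation_norm[OF orth_perm_vec[OF e], of "L (axis j 1)"]
        orthogonal_transformation_norm[OF oL, of "axis j 1"]
      by simp
    then show ?thesis by simp
  qed
  have "1 / (8 * \<tau>^3) = \<bar>det (matrix L)\<bar> / ((2*\<tau>)^CARD(3) * 1)"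
    by (simp add: d1 power_mult_distrib)
  also have "\<dots> \<le> norm (integral P (\<lambda>x. exp (cdot (rho v z k \<tau>) (cvec (x - xc)))))"
    using As(2) by (simp add: pr)
  finally show "1 / (8 * \<tau>^3) \<le> norm (integral P (\<lambda>x. exp (cdot (rho v z k \<tau>) (cvec (x - xc)))))" .
qed



theorem mainTheorem13:
  fixes \<alpha>m \<alpha>M :: real
  assumes dim: "CARD('n) = 2 \<or> CARD('n) = 3"
    and "0 < 2 * \<alpha>m" and "2 * \<alpha>m < 2 * \<alpha>M" and "2 * \<alpha>M < pi"
  shows "\<exists>c>0. \<forall>\<alpha>'. 2 * \<alpha>M < 2 * \<alpha>' \<and> 2 * \<alpha>' < pi \<longrightarrow>
          (\<exists>C>0. \<forall>k>0. \<forall>(Q :: (real^'n) set) P xc. in_G \<alpha>m \<alpha>M \<alpha>' Q P xc \<longrightarrow>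
             (\<exists>\<rho> :: real \<Rightarrow> complex^'n.
                (\<forall>\<tau>>0. cdot (\<rho> \<tau>) (\<rho> \<tau>) + complex_of_real (k^2) = 0 \<and>
                        \<tau> = norm (Re_vec (\<rho> \<tau>)) \<and>
                        (\<forall>x\<in>Q. Re_vec (\<rho> \<tau>) \<bullet> (x - xc)
                                \<le> - cos \<alpha>' * norm (Re_vec (\<rho> \<tau>)) * norm (x - xc))) \<and>
                (\<forall>\<tau>\<ge>k * C.
                   (\<lambda>x. exp (cdot (\<rho> \<tau>) (cvec (x - xc)))) integrable_on P \<and>
                   norm (integral P (\<lambda>x. exp (cdot (\<rho> \<tau>) (cvec (x - xc)))))
                     \<ge> c * \<tau> powr (- real CARD('n)))))"
proof -
  note hyp = assms(2-4)
  define s0 where "s0 = min (sin (2 * \<alpha>m)) (sin (2 * \<alpha>M))"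
  have s0pos: "0 < s0"
  proof -
    have "0 < sin (2 * \<alpha>m)" using hyp by (intro sin_gt_zero) auto
    moreover have "0 < sin (2 * \<alpha>M)" using hyp by (intro sin_gt_zero) auto
    ultimately show ?thesis by (simp add: s0_def)
  qed
  define c where "c = min (s0 / 4) (1 / 8)"
  have cpos: "0 < c" using s0pos by (simp add: c_def)
  show ?thesis
  proof (rule exI[of _ c], rule conjI[OF cpos], intro allI impI)
    fix \<alpha>' :: real assume al: "2 * \<alpha>M < 2 * \<alpha>' \<and> 2 * \<alpha>' < pi"
    show "\<exists>C>0. \<forall>k>0. \<forall>(Q :: (real^'n) set) P xc. in_G \<alpha>m \<alpha>M \<alpha>' Q P xc \<longrightarrow>
             (\<exists>\<rho> :: real \<Rightarrow> complex^'n.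
                (\<forall>\<tau>>0. cdot (\<rho> \<tau>) (\<rho> \<tau>) + complex_of_real (k^2) = 0 \<and>
                        \<tau> = norm (Re_vec (\<rho> \<tau>)) \<and>
                        (\<forall>x\<in>Q. Re_vec (\<rho> \<tau>) \<bullet> (x - xc)
                                \<le> - cos \<alpha>' * norm (Re_vec (\<rho> \<tau>)) * norm (x - xc))) \<and>
                (\<forall>\<tau>\<ge>k * C.
                   (\<lambda>x. exp (cdot (\<rho> \<tau>) (cvec (x - xc)))) integrable_on P \<and>
                   norm (integral P (\<lambda>x. exp (cdot (\<rho> \<tau>) (cvec (x - xc)))))
                     \<ge> c * \<tau> powr (- real CARD('n))))"
    proof (rule exI[of _ "1::real"], rule conjI[OF zero_less_one], intro allI impI)
      fix k :: real and Q P and xc :: "real^'n"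
      assume k: "0 < k" and G: "in_G \<alpha>m \<alpha>M \<alpha>' Q P xc"
      obtain v \<theta> where v: "norm v = 1" and th: "0 < \<theta>" "\<theta> < pi / 2"
        and Qd: "Q = spherical_cone xc v \<theta>" and tha: "2 * \<theta> \<le> 2 * \<alpha>'"
        using G unfolding in_G_def by blast
      have PQ: "P \<subseteq> spherical_cone xc v \<theta>" using G Qd unfolding in_G_def by blast
      have "2 \<le> DIM(real^'n)" using dim by auto
      then obtain z0 :: "real^'n" where z0: "z0 \<noteq> 0" "orthogonal v z0"
        by (rule orthogonal_to_vector_exists)
      define z where "z = z0 /\<^sub>R norm z0"
      have z: "norm z = 1" using z0 by (simp add: z_def)
      have vz: "v \<bullet> z = 0" using z0 by (simp add: z_def orthogonal_def)
      show "\<exists>\<rho> :: real \<Rightarrow> complex^'n.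
                (\<forall>\<tau>>0. cdot (\<rho> \<tau>) (\<rho> \<tau>) + complex_of_real (k^2) = 0 \<and>
                        \<tau> = norm (Re_vec (\<rho> \<tau>)) \<and>
                        (\<forall>x\<in>Q. Re_vec (\<rho> \<tau>) \<bullet> (x - xc)
                                \<le> - cos \<alpha>' * norm (Re_vec (\<rho> \<tau>)) * norm (x - xc))) \<and>
                (\<forall>\<tau>\<ge>k * 1.
                   (\<lambda>x. exp (cdot (\<rho> \<tau>) (cvec (x - xc)))) integrable_on P \<and>
                   norm (integral P (\<lambda>x. exp (cdot (\<rho> \<tau>) (cvec (x - xc)))))
                     \<ge> c * \<tau> powr (- real CARD('n)))"
      proof (rule exI[of _ "rho v z k"], rule conjI, goal_cases)
        case 1
        show ?case
        proof (intro allI impI conjI ballI)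
        fix \<tau> :: real assume tau: "0 < \<tau>"
        show "cdot (rho v z k \<tau>) (rho v z k \<tau>) + complex_of_real (k^2) = 0"
          by (rule rho_cdot[OF v z vz])
        show nR: "\<tau> = norm (Re_vec (rho v z k \<tau>))"
          using tau by (simp add: Re_vec_rho v)
        fix x assume xQ: "x \<in> Q"
        have "cos \<alpha>' \<le> cos \<theta>" using th tha al by (intro cos_monotone_0_pi_le) auto
        then have "norm (x - xc) * cos \<alpha>' \<le> norm (x - xc) * cos \<theta>"
          by (intro mult_left_mono) auto
        also have "\<dots> \<le> v \<bullet> (x - xc)"
          using xQ Qd by (auto simp: spherical_cone_def inner_commute)
        finally have "norm (x - xc) * cos \<alpha>' \<le> v \<bullet> (x - xc)" .
        then have "\<tau> * (norm (x - xc) * cos \<alpha>') \<le> \<tau> * (v \<bullet> (x - xc))"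
          using tau by (intro mult_left_mono) auto
        then show "Re_vec (rho v z k \<tau>) \<bullet> (x - xc) \<le> - cos \<alpha>' * norm (Re_vec (rho v z k \<tau>)) * norm (x - xc)"
          using tau by (simp add: Re_vec_rho v algebra_simps)
        qed
      next
        case 2
        show ?case
        proof (intro allI impI)
        fix \<tau> :: real assume tk: "k * 1 \<le> \<tau>"
        then have tau: "0 < \<tau>" "k \<le> \<tau>" using k by auto
        have pw: "\<tau> powr (- real n) = 1 / \<tau> ^ n" for n
          using tau by (simp add: powr_minus powr_realpow divide_inverse)
        show "(\<lambda>x. exp (cdot (rho v z k \<tau>) (cvec (x - xc)))) integrable_on P \<and>
              c * \<tau> powr (- real CARD('n)) \<le> norm (integral P (\<lambda>x. exp (cdot (rho v z k \<tau>) (cvec (x - xc)))))"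
        proof (cases "CARD('n) = 2")
          case True
          then obtain u w where uw: "u \<noteq> 0" "w \<noteq> 0" "P = {xc + s *\<^sub>R u + t *\<^sub>R w | s t. 0 < s \<and> 0 < t}"
            "2 * \<alpha>m < arccos ((u \<bullet> w) / (norm u * norm w))"
            "arccos ((u \<bullet> w) / (norm u * norm w)) < 2 * \<alpha>M"
            using G unfolding in_G_def by blast
          note C2 = case2[OF True uw(3) uw(1,2) _ _ _ _ PQ v z vz th tau k, of "2 * \<alpha>m" "2 * \<alpha>M"]
          have ang: "2 * \<alpha>m \<le> arccos ((u \<bullet> w) / (norm u * norm w))"
            "arccos ((u \<bullet> w) / (norm u * norm w)) \<le> 2 * \<alpha>M" "0 < 2 * \<alpha>m" "2 * \<alpha>M < pi"
            using uw hyp by auto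
          have "c * \<tau> powr (- real CARD('n)) = c * (1 / \<tau>^2)"
            using True pw[of 2] by simp
          also have "\<dots> \<le> s0 / 4 * (1 / \<tau>^2)"
            using tau by (intro mult_right_mono) (auto simp: c_def)
          also have "\<dots> = min (sin (2 * \<alpha>m)) (sin (2 * \<alpha>M)) / (4 * \<tau>^2)"
            by (simp add: s0_def)
          also have "\<dots> \<le> norm (integral P (\<lambda>x. exp (cdot (rho v z k \<tau>) (cvec (x - xc)))))"
            by (rule C2(2)[OF ang])
          finally show ?thesis using C2(1)[OF ang] by simp
        next
          case False
          then have card3: "CARD('n) = 3" using dim by auto
          then obtain f where f: "rigid_motion f" "f xc = 0" "f ` P = {y. \<forall>i. 0 < y $ i}"
            using G unfolding in_G_def by blast
          note C3 = case3[OF card3 f PQ v z vz th tau k]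
          have "c * \<tau> powr (- real CARD('n)) = c * (1 / \<tau>^3)"
            using card3 pw[of 3] by simp
          also have "\<dots> \<le> 1 / 8 * (1 / \<tau>^3)"
            using tau by (intro mult_right_mono) (auto simp: c_def)
          also have "\<dots> = 1 / (8 * \<tau>^3)" by simp
          also have "\<dots> \<le> norm (integral P (\<lambda>x. exp (cdot (rho v z k \<tau>) (cvec (x - xc)))))"
            by (rule C3(2))
          finally show ?thesis using C3(1) by simp
        qed
        qed
      qed
    qed
  qed
qed


end
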